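(* Let $M$ be a finite set, let $\mathcal{X}\subseteq\mathcal{P}(M)$ be a closure system on $M$, and let $\mathcal{M}=\{N_i\mid i\in I\}\subseteq\mathcal{P}(M)$ be a consortial domain on $M$. If $\mathcal{M}$ is closed under (pairwise) intersection, then the set $\bigcup_{N\in\mathcal{M}}\mathcal{X}_N$ is closed under (pairwise) intersection.
   Context: A closure system on $M$ is a family of subsets of $M$ containing $M$ and closed under intersections. A consortial domain on $M$ is a family $\mathcal{M}=\{N_i\mid i\in I\}\subseteq\mathcal{P}(M)$ with $\bigcup_{i\in I}N_i=M$. For $N\subseteq M$, $\mathcal{X}_N:=\{X\cap N\mid X\in\mathcal{X}\}$. *)

theory Defs
  imports Main
begin

definition closure_system :: "'a set \<Rightarrow> 'a set set \<Rightarrow> bool" where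
  "closure_system M X \<longleftrightarrow> X \<subseteq> Pow M \<and> M \<in> X \<and> (\<forall>S. S \<subseteq> X \<longrightarrow> \<Inter>S \<inter> M \<in> X)"

definition consortial_domain :: "'a set \<Rightarrow> 'a set set \<Rightarrow> bool" where
  "consortial_domain M \<M> \<longleftrightarrow> \<M> \<subseteq> Pow M \<and> \<Union>\<M> = M"

definition restr :: "'a set set \<Rightarrow> 'a set \<Rightarrow> 'a set set" where
  "restr X N = {Y \<inter> N | Y. Y \<in> X}"

end

theory Submission
  imports Defs
begin

theorem mainTheorem2:
  fixes M :: "'a set" and X :: "'a set set" and \<M> :: "'a set set"
  assumes "finite M"
    and "closure_system M X"
    and "consortial_domain M \<M>"
    and "\<forall>N1\<in>\<M>. \<forall>N2\<in>\<M>. N1 \<inter> N2 \<in> \<M>"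
  shows "\<forall>A\<in>(\<Union>N\<in>\<M>. restr X N). \<forall>B\<in>(\<Union>N\<in>\<M>. restr X N). A \<inter> B \<in> (\<Union>N\<in>\<M>. restr X N)"
proof (intro ballI)
  fix A B assume "A \<in> (\<Union>N\<in>\<M>. restr X N)" "B \<in> (\<Union>N\<in>\<M>. restr X N)"
  then obtain N1 N2 Y1 Y2 where n: "N1 \<in> \<M>" "N2 \<in> \<M>" "Y1 \<in> X" "Y2 \<in> X"
    and ab: "A = Y1 \<inter> N1" "B = Y2 \<inter> N2" unfolding restr_def by auto
  have cs: "X \<subseteq> Pow M" "\<forall>S. S \<subseteq> X \<longrightarrow> \<Inter>S \<inter> M \<in> X" using assms(2) unfolding closure_system_def by auto
  have "{Y1, Y2} \<subseteq> X" using n by simp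
  hence "\<Inter>{Y1, Y2} \<inter> M \<in> X" using cs(2) by blast
  moreover have "\<Inter>{Y1, Y2} \<inter> M = Y1 \<inter> Y2" using cs(1) n(3) by auto
  ultimately have y: "Y1 \<inter> Y2 \<in> X" by simp
  have "A \<inter> B = (Y1 \<inter> Y2) \<inter> (N1 \<inter> N2)" using ab by blast
  hence "A \<inter> B \<in> restr X (N1 \<inter> N2)" using y unfolding restr_def by auto
  moreover have "N1 \<inter> N2 \<in> \<M>" using assms(4) n by blast
  ultimately show "A \<inter> B \<in> (\<Union>N\<in>\<M>. restr X N)" by blast
qed

end
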